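(* Let $N\ge1$, $H=(H_1,\dots,H_N)\in]0,1[^N$, $a\in\mathbb{R}^N\setminus\{(0,\dots,0)\}$, let $S^H(a)$ be the mixed sub-fractional Brownian motion with parameters $N,a,H$, and let $u>1$. There is a constant $c>0$ such that for all $s,t\in[0,\infty)$ with $s\neq t$, $$\mathbb{E}\Big(\big(|s-t|+|S^H_t(a)-S^H_s(a)|\big)^{-u}\Big)\le c\,|t-s|^{1-u}\sigma^{-1}(s,t),\qquad\text{where }\sigma^2(s,t)=\mathbb{E}\big(S^H_t(a)-S^H_s(a)\big)^2.$$
   Context: Let $(\Omega,\mathcal F,\mathbb P)$ be a probability space. For $K\in]0,1[$, a fractional Brownian motion on $\mathbb{R}$ with Hurst index $K$ is a continuous centered Gaussian process $\{B^K(t),t\in\mathbb{R}\}$ with $\mathrm{Cov}(B^K(t),B^K(s))=\frac12(|t|^{2K}+|s|^{2K}-|t-s|^{2K})$. The sub-fractional Brownian motion (sfBm) of index $K$ is $\xi^K_t=(B^K_t+B^K_{-t})/\sqrt2$, $t\ge0$; it is a continuous centered Gaussian process with $\mathrm{Cov}(\xi^K_t,\xi^K_s)=s^{2K}+t^{2K}-\frac12\big((s+t)^{2K}+|t-s|^{2K}\big)$. For $N\ge1$, $H\in]0,1[^N$, $a\in\mathbb{R}^N\setminus\{0\}$, the mixed sub-fractional Brownian motion (msfBm) is $S^H_t(a)=\sum_{i=1}^N a_i\xi^{H_i}(t)$, $t\ge0$, where $\xi^{H_1},\dots,\xi^{H_N}$ are independent sfBms with indices $H_1,\dots,H_N$.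 *)

theory Defs
  imports "HOL-Probability.Probability"
begin

definition centered_gaussian :: "'a measure \<Rightarrow> ('a \<Rightarrow> real) \<Rightarrow> bool" where
  "centered_gaussian M X \<longleftrightarrow>
     X \<in> borel_measurable M \<and>
     ((AE \<omega> in M. X \<omega> = 0) \<or> (\<exists>\<sigma>>0. distributed M lborel X (normal_density 0 \<sigma>)))"

definition sfbm_cov :: "real \<Rightarrow> real \<Rightarrow> real \<Rightarrow> real" where
  "sfbm_cov K s t = s powr (2*K) + t powr (2*K)
      - ((s + t) powr (2*K) + \<bar>t - s\<bar> powr (2*K)) / 2"

definition is_sfbm :: "'a measure \<Rightarrow> real \<Rightarrow> (real \<Rightarrow> 'a \<Rightarrow> real) \<Rightarrow> bool" where
  "is_sfbm M K \<xi> \<longleftrightarrow>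
     (\<forall>T c. finite T \<and> T \<subseteq> {0..} \<longrightarrow>
        centered_gaussian M (\<lambda>\<omega>. \<Sum>t\<in>T. c t * \<xi> t \<omega>)) \<and>
     (\<forall>s t. 0 \<le> s \<and> 0 \<le> t \<longrightarrow>
        integral\<^sup>L M (\<lambda>\<omega>. \<xi> t \<omega> * \<xi> s \<omega>) = sfbm_cov K s t) \<and>
     (\<forall>\<omega>\<in>space M. continuous_on {0..} (\<lambda>t. \<xi> t \<omega>))"

definition sfbm_path :: "(real \<Rightarrow> 'a \<Rightarrow> real) \<Rightarrow> 'a \<Rightarrow> real \<Rightarrow> real" where
  "sfbm_path \<xi> \<omega> = restrict (\<lambda>t. \<xi> t \<omega>) {0..}"

definition msfbm :: "nat \<Rightarrow> (nat \<Rightarrow> real) \<Rightarrow> (nat \<Rightarrow> real \<Rightarrow> 'a \<Rightarrow> real) \<Rightarrow> real \<Rightarrow> 'a \<Rightarrow> real" where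
  "msfbm N a \<xi> t \<omega> = (\<Sum>i<N. a i * \<xi> i t \<omega>)"

end

theory Submission
  imports Defs "HOL-Real_Asymp.Real_Asymp"
begin

lemma halfline_int:
  fixes h u :: real assumes h: "h>0" and u: "u>1"
  shows "(\<integral>\<^sup>+x. ennreal ((h + x) powr (-u)) * indicator {0..} x \<partial>lborel) = ennreal (h powr (1-u)/(u-1))"
proof -
  have "(\<integral>\<^sup>+x. ennreal ((h + x) powr (-u)) * indicator {0..} x \<partial>lborel) = ennreal (0 - (- ((h + 0) powr (1-u))/(u-1)))"
  proof (rule nn_integral_FTC_atLeast[where F="\<lambda>y. - ((h+y) powr (1-u))/(u-1)"])
    show "(\<lambda>x. (h + x) powr - u) \<in> borel_measurable borel" by measurable
    show "((\<lambda>y. - ((h + y) powr (1 - u)) / (u - 1)) \<longlongrightarrow> 0) at_top"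
      using h u by real_asymp
    fix x :: real assume x: "0 \<le> x"
    show "0 \<le> (h + x) powr - u" by simp
    have hx: "h + x > 0" using h x by simp
    show "((\<lambda>y. - ((h + y) powr (1 - u)) / (u - 1)) has_real_derivative (h + x) powr - u) (at x)"
    proof -
      have d: "DERIV (\<lambda>y. (h+y) powr (1-u)) x :> (1-u) * (h+x) powr ((1-u) - of_nat 1) * 1"
        by (rule DERIV_fun_powr) (auto intro!: derivative_eq_intros simp: hx)
      have "DERIV (\<lambda>y. - ((h+y) powr (1-u)) / (u-1)) x :> - ((1-u) * (h+x) powr ((1-u) - of_nat 1) * 1) / (u-1)"
        using DERIV_cdivide[OF DERIV_minus[OF d], of "u-1"] by simp
      moreover have "- ((1-u) * (h+x) powr ((1-u) - of_nat 1) * 1) / (u-1) = (h+x) powr (-u)"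
        using u by (simp add: field_simps)
      ultimately show ?thesis by simp
    qed
  qed
  then show ?thesis by simp
qed

lemma line_int:
  fixes h u :: real assumes h: "h>0" and u: "u>1"
  shows "(\<integral>\<^sup>+x. ennreal ((h + \<bar>x\<bar>) powr (-u)) \<partial>lborel) \<le> ennreal (2 * (h powr (1-u)/(u-1)))"
proof -
  define g where "g x = ennreal ((h + x) powr (-u)) * indicator {0..} x" for x :: real
  have gm[measurable]: "g \<in> borel_measurable borel" unfolding g_def by measurable
  have "(\<integral>\<^sup>+x. ennreal ((h + \<bar>x\<bar>) powr (-u)) \<partial>lborel) \<le> (\<integral>\<^sup>+x. g x + g (0 + (-1) * x) \<partial>lborel)"
    by (rule nn_integral_mono) (auto simp: g_def split: split_indicator)
  also have "\<dots> = (\<integral>\<^sup>+x. g x \<partial>lborel) + (\<integral>\<^sup>+x. g (0 + (-1) * x) \<partial>lborel)"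
    by (rule nn_integral_add) auto
  also have "(\<integral>\<^sup>+x. g (0 + (-1) * x) \<partial>lborel) = (\<integral>\<^sup>+x. g x \<partial>lborel)"
    using nn_integral_real_affine[OF gm, of "-1" 0] by simp
  also have "(\<integral>\<^sup>+x. g x \<partial>lborel) = ennreal (h powr (1-u)/(u-1))"
    unfolding g_def by (rule halfline_int[OF h u])
  also have "ennreal (h powr (1-u)/(u-1)) + ennreal (h powr (1-u)/(u-1)) = ennreal (2 * (h powr (1-u)/(u-1)))"
    using u by (subst ennreal_plus[symmetric]) auto
  finally show ?thesis .
qed

lemma normal_density_le:
  assumes "\<sigma> > 0" shows "normal_density 0 \<sigma> x \<le> 1 / \<sigma>"
proof -
  have "exp (-(x - 0)\<^sup>2/ (2 * \<sigma>\<^sup>2)) \<le> 1" by simp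
  moreover have "sqrt (2 * pi * \<sigma>\<^sup>2) = sqrt (2*pi) * \<sigma>"
    using assms by (simp add: real_sqrt_mult)
  moreover have "sqrt (2*pi) \<ge> 1" using pi_gt3 by simp
  ultimately have "normal_density 0 \<sigma> x \<le> 1 / (sqrt (2*pi) * \<sigma>)"
    unfolding normal_density_def
  proof -
    assume e: "exp (-(x - 0)\<^sup>2/ (2 * \<sigma>\<^sup>2)) \<le> 1" and q: "sqrt (2 * pi * \<sigma>\<^sup>2) = sqrt (2*pi) * \<sigma>"
    have "1 / sqrt (2 * pi * \<sigma>\<^sup>2) * exp (-(x - 0)\<^sup>2/ (2 * \<sigma>\<^sup>2)) \<le> 1 / sqrt (2 * pi * \<sigma>\<^sup>2) * 1"
      by (rule mult_left_mono[OF e]) simp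
    then show "1 / sqrt (2 * pi * \<sigma>\<^sup>2) * exp (-(x - 0)\<^sup>2/ (2 * \<sigma>\<^sup>2)) \<le> 1 / (sqrt (2*pi) * \<sigma>)"
      using q by simp
  qed
  also have "\<dots> \<le> 1 / \<sigma>"
    using assms \<open>sqrt (2*pi) \<ge> 1\<close> by (simp add: frac_le)
  finally show ?thesis .
qed

lemma gauss_bound:
  assumes P: "prob_space M" and D: "distributed M lborel X (normal_density 0 \<sigma>)"
    and s: "\<sigma> > 0" and h: "h > 0" and u: "u > 1"
  shows "integral\<^sup>L M (\<lambda>\<omega>. (h + \<bar>X \<omega>\<bar>) powr (- u)) \<le> 2/(u-1) * h powr (1-u) / \<sigma>"
proof -
  have Xm[measurable]: "X \<in> borel_measurable M"
    using distributed_measurable[OF D] by simp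
  define B where "B = 1/\<sigma> * (2 * (h powr (1-u)/(u-1)))"
  have "(\<integral>\<^sup>+\<omega>. ennreal ((h + \<bar>X \<omega>\<bar>) powr (- u)) \<partial>M)
      = (\<integral>\<^sup>+x. ennreal (normal_density 0 \<sigma> x) * ennreal ((h + \<bar>x\<bar>) powr (- u)) \<partial>lborel)"
    by (rule distributed_nn_integral[OF D, symmetric]) measurable
  also have "\<dots> \<le> (\<integral>\<^sup>+x. ennreal (1/\<sigma>) * ennreal ((h + \<bar>x\<bar>) powr (- u)) \<partial>lborel)"
    by (intro nn_integral_mono mult_right_mono ennreal_leI normal_density_le s) simp
  also have "\<dots> = ennreal (1/\<sigma>) * (\<integral>\<^sup>+x. ennreal ((h + \<bar>x\<bar>) powr (- u)) \<partial>lborel)"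
    by (rule nn_integral_cmult) measurable
  also have "\<dots> \<le> ennreal (1/\<sigma>) * ennreal (2 * (h powr (1-u)/(u-1)))"
    by (intro mult_left_mono line_int h u) simp
  also have "\<dots> = ennreal B" unfolding B_def using s by (simp add: ennreal_mult'[symmetric])
  finally have le: "(\<integral>\<^sup>+\<omega>. ennreal ((h + \<bar>X \<omega>\<bar>) powr (- u)) \<partial>M) \<le> ennreal B" .
  have "integral\<^sup>L M (\<lambda>\<omega>. (h + \<bar>X \<omega>\<bar>) powr (- u)) = enn2real (\<integral>\<^sup>+\<omega>. ennreal ((h + \<bar>X \<omega>\<bar>) powr (- u)) \<partial>M)"
    by (rule integral_eq_nn_integral) auto
  also have "\<dots> \<le> enn2real (ennreal B)"
    by (rule enn2real_mono[OF le]) simp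
  also have "\<dots> = B" unfolding B_def using s u h by simp
  also have "B = 2/(u-1) * h powr (1-u) / \<sigma>" unfolding B_def by simp
  finally show ?thesis .
qed

lemma powr_subadd:
  fixes y z q :: real assumes y: "y > 0" and z: "z > 0" and q: "q \<le> 1"
  shows "(y + z) powr q \<le> y powr q + z powr q"
proof -
  have "(y + z) powr q = y * (y+z) powr (q-1) + z * (y+z) powr (q-1)"
    using y z powr_mult_base[of "y+z" "q-1"] by (simp add: distrib_right)
  also have "\<dots> \<le> y * y powr (q-1) + z * z powr (q-1)"
    using y z q by (intro add_mono mult_left_mono powr_mono2') auto
  also have "\<dots> = y powr q + z powr q"
    using y z by (simp add: powr_mult_base)
  finally show ?thesis .
qed

lemma deriv_neg:
  fixes a x p :: real assumes p: "0 < p" "p < 2" and x: "0 < x" "x < a"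
  shows "p * (a + x) powr (p - 1) - p * (a - x) powr (p - 1) - 2 * p * x powr (p - 1) < 0"
proof -
  define q where "q = p - 1"
  have "(a + x) powr q < (a - x) powr q + 2 * x powr q"
  proof (cases "q \<le> 0")
    case True
    then have "(a + x) powr q \<le> (a - x) powr q" using x by (intro powr_mono2') auto
    moreover have "x powr q > 0" using x by simp
    ultimately show ?thesis by linarith
  next
    case False
    have "(a + x) powr q = ((a - x) + 2 * x) powr q" by (simp add: algebra_simps)
    also have "\<dots> \<le> (a - x) powr q + (2 * x) powr q"
      using x p q_def by (intro powr_subadd) auto
    also have "(2 * x) powr q = 2 powr q * x powr q" using x by (simp add: powr_mult)
    also have "2 powr q < 2 powr 1" using False p q_def by (intro powr_less_mono) auto
    then have "2 powr q * x powr q < 2 * x powr q" using x by simp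
    finally show ?thesis by simp
  qed
  then have "p * (a + x) powr q < p * ((a - x) powr q + 2 * x powr q)" using p by simp
  then show ?thesis unfolding q_def by (simp add: algebra_simps)
qed

lemma core_ineq:
  fixes a b p :: real assumes p: "0 < p" "p < 2" and b: "0 < b" "b \<le> a"
  shows "(a + b) powr p + (a - b) powr p < 2 * a powr p + 2 * b powr p"
proof (cases "b = a")
  case True
  have "(2 * b) powr p = 2 powr p * b powr p" using b by (simp add: powr_mult)
  moreover have "2 powr p < 2 powr 2" using p by (intro powr_less_mono) auto
  moreover have "b powr p > 0" using b by simp
  ultimately show ?thesis using True by (simp add: mult_2[symmetric])
next
  case False
  then have ba: "b < a" using b by simp
  define F where "F x = (a + x) powr p + (a - x) powr p - 2 * a powr p - 2 * x powr p" for x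
  have cont: "continuous_on {0..b} F"
    unfolding F_def using ba p b
    by (intro continuous_intros continuous_on_powr') auto
  have der: "DERIV F x :> p * (a + x) powr (p - 1) - p * (a - x) powr (p - 1) - 2 * p * x powr (p - 1)"
    if "0 < x" "x < b" for x
  proof -
    have d1: "DERIV (\<lambda>y. (a+y) powr p) x :> p * (a + x) powr (p - of_nat 1) * 1"
      by (rule DERIV_fun_powr) (use that ba in \<open>auto intro!: derivative_eq_intros\<close>)
    have d2: "DERIV (\<lambda>y. (a-y) powr p) x :> p * (a - x) powr (p - of_nat 1) * (-1)"
      by (rule DERIV_fun_powr) (use that ba in \<open>auto intro!: derivative_eq_intros\<close>)
    have d3: "DERIV (\<lambda>y. y powr p) x :> p * x powr (p - 1)"
      by (rule has_real_derivative_powr) (use that in auto)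
    have "DERIV F x :> p * (a + x) powr (p - of_nat 1) * 1 + p * (a - x) powr (p - of_nat 1) * (-1) - 0 - 2 * (p * x powr (p - 1))"
      unfolding F_def
      by (intro DERIV_diff DERIV_add DERIV_const DERIV_cmult d1 d2 d3)
    then show ?thesis by (simp add: algebra_simps)
  qed
  obtain l z where z: "0 < z" "z < b" and dz: "DERIV F z :> l" and eq: "F b - F 0 = (b - 0) * l"
    using MVT[OF b(1) cont] der by (metis real_differentiable_def)
  have "l = p * (a + z) powr (p - 1) - p * (a - z) powr (p - 1) - 2 * p * z powr (p - 1)"
    using DERIV_unique[OF dz der[OF z]] .
  then have "l < 0" using deriv_neg[OF p, of z a] z ba by simp
  then have "b * l < 0" using b by (simp add: mult_pos_neg)
  then have "F b < F 0" using eq by simp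
  moreover have "F 0 = 0" unfolding F_def using p by simp
  ultimately show ?thesis unfolding F_def by simp
qed

lemma var_pos_aux:
  fixes K s t :: real assumes K: "0 < K" "K < 1" and st: "0 \<le> s" "s < t"
  shows "sfbm_cov K t t + sfbm_cov K s s - 2 * sfbm_cov K s t > 0"
proof -
  have c: "(s + t + (t - s)) powr (2*K) + (s + t - (t - s)) powr (2*K) < 2 * (s + t) powr (2*K) + 2 * (t - s) powr (2*K)"
    using K st by (intro core_ineq) auto
  have e1: "s + t + (t - s) = t + t" and e2: "s + t - (t - s) = s + s" by simp_all
  show ?thesis using c st K unfolding sfbm_cov_def e1 e2 by (simp add: add.commute field_simps)
qed

lemma var_pos:
  fixes K s t :: real assumes K: "0 < K" "K < 1" and st: "0 \<le> s" "0 \<le> t" "s \<noteq> t"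
  shows "sfbm_cov K t t + sfbm_cov K s s - 2 * sfbm_cov K s t > 0"
proof (cases "s < t")
  case True then show ?thesis using var_pos_aux[OF K st(1) True] by simp
next
  case False then have "t < s" using st by simp
  from var_pos_aux[OF K st(2) this] show ?thesis
    unfolding sfbm_cov_def by (simp add: add.commute abs_minus_commute)
qed

lemma (in prob_space) cg_sq_int:
  assumes "centered_gaussian M Y" shows "integrable M (\<lambda>\<omega>. (Y \<omega>)\<^sup>2)"
proof -
  have Ym[measurable]: "Y \<in> borel_measurable M" using assms unfolding centered_gaussian_def by simp
  from assms consider "AE \<omega> in M. Y \<omega> = 0" | \<sigma> where "\<sigma> > 0" "distributed M lborel Y (normal_density 0 \<sigma>)"
    unfolding centered_gaussian_def by blast
  then show ?thesis
  proof cases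
    case 1
    have "integrable M (\<lambda>\<omega>. (0::real))" by simp
    then show ?thesis by (rule integrable_cong_AE_imp) (use 1 in auto)
  next
    case 2
    have "integrable lborel (\<lambda>x. normal_density 0 \<sigma> x * (x - 0)^2)"
      by (rule integrable_normal_moment) (rule 2(1))
    then show ?thesis
      using distributed_integrable[OF 2(2), of "\<lambda>x. x^2"] by simp
  qed
qed

lemma (in prob_space) cg_normal:
  assumes "centered_gaussian M Y" and pos: "integral\<^sup>L M (\<lambda>\<omega>. (Y \<omega>)\<^sup>2) > 0"
  shows "\<exists>\<sigma>>0. distributed M lborel Y (normal_density 0 \<sigma>) \<and> \<sigma>\<^sup>2 = integral\<^sup>L M (\<lambda>\<omega>. (Y \<omega>)\<^sup>2)"
proof -
  have Ym[measurable]: "Y \<in> borel_measurable M" using assms unfolding centered_gaussian_def by simp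
  from assms consider "AE \<omega> in M. Y \<omega> = 0" | \<sigma> where "\<sigma> > 0" "distributed M lborel Y (normal_density 0 \<sigma>)"
    unfolding centered_gaussian_def by blast
  then show ?thesis
  proof cases
    case 1
    have "integral\<^sup>L M (\<lambda>\<omega>. (Y \<omega>)\<^sup>2) = integral\<^sup>L M (\<lambda>\<omega>. 0::real)"
      by (rule integral_cong_AE) (use 1 in auto)
    then show ?thesis using pos by simp
  next
    case 2
    have "variance Y = \<sigma>\<^sup>2" by (rule normal_distributed_variance[OF 2])
    moreover have "expectation Y = 0" by (rule normal_distributed_expectation[OF 2])
    ultimately show ?thesis using 2 by auto
  qed
qed

lemma (in prob_space) normal_sq:
  assumes "\<sigma> > 0" "distributed M lborel Y (normal_density 0 \<sigma>)"
  shows "integral\<^sup>L M (\<lambda>\<omega>. (Y \<omega>)\<^sup>2) = \<sigma>\<^sup>2"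
proof -
  have "variance Y = \<sigma>\<^sup>2" by (rule normal_distributed_variance[OF assms])
  moreover have "expectation Y = 0" by (rule normal_distributed_expectation[OF assms])
  ultimately show ?thesis by simp
qed

lemma (in prob_space) prod_int:
  fixes X Y :: "'a \<Rightarrow> real"
  assumes [measurable]: "X \<in> borel_measurable M" "Y \<in> borel_measurable M"
    and "integrable M (\<lambda>\<omega>. (X \<omega>)\<^sup>2)" "integrable M (\<lambda>\<omega>. (Y \<omega>)\<^sup>2)"
  shows "integrable M (\<lambda>\<omega>. X \<omega> * Y \<omega>)"
proof (rule Bochner_Integration.integrable_bound[where f="\<lambda>\<omega>. (X \<omega>)\<^sup>2 + (Y \<omega>)\<^sup>2"])
  show "integrable M (\<lambda>\<omega>. (X \<omega>)\<^sup>2 + (Y \<omega>)\<^sup>2)" using assms by auto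
  show "(\<lambda>\<omega>. X \<omega> * Y \<omega>) \<in> borel_measurable M" by measurable
  show "AE \<omega> in M. norm (X \<omega> * Y \<omega>) \<le> norm ((X \<omega>)\<^sup>2 + (Y \<omega>)\<^sup>2)"
  proof (rule AE_I2)
    fix \<omega>
    have "2 * \<bar>X \<omega>\<bar> * \<bar>Y \<omega>\<bar> \<le> (X \<omega>)\<^sup>2 + (Y \<omega>)\<^sup>2"
      using sum_squares_bound[of "\<bar>X \<omega>\<bar>" "\<bar>Y \<omega>\<bar>"] by simp
    moreover have "0 \<le> \<bar>X \<omega>\<bar> * \<bar>Y \<omega>\<bar>" by simp
    ultimately have "\<bar>X \<omega> * Y \<omega>\<bar> \<le> (X \<omega>)\<^sup>2 + (Y \<omega>)\<^sup>2"
      unfolding abs_mult by linarith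
    then show "norm (X \<omega> * Y \<omega>) \<le> norm ((X \<omega>)\<^sup>2 + (Y \<omega>)\<^sup>2)"
      by simp
  qed
qed

theorem lemma15:
  fixes M :: "'a measure" and N :: nat and H a :: "nat \<Rightarrow> real"
    and \<xi> :: "nat \<Rightarrow> real \<Rightarrow> 'a \<Rightarrow> real" and u :: real
  assumes "prob_space M"
    and "N \<ge> 1"
    and "\<forall>i<N. 0 < H i \<and> H i < 1"
    and "\<exists>i<N. a i \<noteq> 0"
    and "\<forall>i<N. is_sfbm M (H i) (\<xi> i)"
    and "prob_space.indep_vars M (\<lambda>_. PiM {0..} (\<lambda>_. borel))
           (\<lambda>i. sfbm_path (\<xi> i)) {..<N}"
    and "u > 1"
  shows "\<exists>c>0. \<forall>s t. 0 \<le> s \<and> 0 \<le> t \<and> s \<noteq> t \<longrightarrow>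
     integral\<^sup>L M (\<lambda>\<omega>. (\<bar>s - t\<bar> + \<bar>msfbm N a \<xi> t \<omega> - msfbm N a \<xi> s \<omega>\<bar>) powr (- u))
       \<le> c * \<bar>t - s\<bar> powr (1 - u)
           / sqrt (integral\<^sup>L M (\<lambda>\<omega>. (msfbm N a \<xi> t \<omega> - msfbm N a \<xi> s \<omega>)\<^sup>2))"
proof -
  interpret P: prob_space M by fact
  have sf: "\<And>i. i<N \<Longrightarrow> is_sfbm M (H i) (\<xi> i)" using assms(5) by blast
  have sf1: "\<And>i T c. i<N \<Longrightarrow> finite T \<Longrightarrow> T \<subseteq> {0..} \<Longrightarrow> centered_gaussian M (\<lambda>\<omega>. \<Sum>t\<in>T. c t * \<xi> i t \<omega>)"
    using sf unfolding is_sfbm_def by blast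
  have sf2: "\<And>i s t. i<N \<Longrightarrow> 0 \<le> s \<Longrightarrow> 0 \<le> t \<Longrightarrow> integral\<^sup>L M (\<lambda>\<omega>. \<xi> i t \<omega> * \<xi> i s \<omega>) = sfbm_cov (H i) s t"
    using sf unfolding is_sfbm_def by blast
  have key: "integral\<^sup>L M (\<lambda>\<omega>. (\<bar>s - t\<bar> + \<bar>msfbm N a \<xi> t \<omega> - msfbm N a \<xi> s \<omega>\<bar>) powr (- u))
       \<le> 2/(u-1) * \<bar>t - s\<bar> powr (1 - u)
           / sqrt (integral\<^sup>L M (\<lambda>\<omega>. (msfbm N a \<xi> t \<omega> - msfbm N a \<xi> s \<omega>)\<^sup>2))"
    if st: "0 \<le> s" "0 \<le> t" "s \<noteq> t" for s t
  proof -
    define Y where "Y i \<omega> = \<xi> i t \<omega> - \<xi> i s \<omega>" for i \<omega>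
    have gY: "centered_gaussian M (Y i)" if i: "i<N" for i
    proof -
      have "centered_gaussian M (\<lambda>\<omega>. \<Sum>r\<in>{s,t}. (\<lambda>r. if r = t then 1 else -1) r * \<xi> i r \<omega>)"
        by (rule sf1[OF i]) (use st in auto)
      moreover have "(\<lambda>\<omega>. \<Sum>r\<in>{s,t}. (\<lambda>r. if r = t then 1 else -1) r * \<xi> i r \<omega>) = Y i"
        using st(3) by (auto simp: Y_def fun_eq_iff)
      ultimately show ?thesis by simp
    qed
    have gX: "centered_gaussian M (\<xi> i r)" if i: "i<N" and r: "0 \<le> r" for i r
    proof -
      have "centered_gaussian M (\<lambda>\<omega>. \<Sum>r'\<in>{r}. (\<lambda>_. 1) r' * \<xi> i r' \<omega>)"
        by (rule sf1[OF i]) (use r in auto)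
      then show ?thesis by simp
    qed
    have meas[measurable]: "\<xi> i r \<in> borel_measurable M" if "i<N" "0 \<le> r" for i r
      using gX[OF that] unfolding centered_gaussian_def by simp
    have sq: "integrable M (\<lambda>\<omega>. (\<xi> i r \<omega>)\<^sup>2)" if "i<N" "0 \<le> r" for i r
      by (rule P.cg_sq_int[OF gX[OF that]])
    have pint: "integrable M (\<lambda>\<omega>. \<xi> i r \<omega> * \<xi> i r' \<omega>)" if "i<N" "0 \<le> r" "0 \<le> r'" for i r r'
      using that by (intro P.prod_int meas sq)
    have cov: "integral\<^sup>L M (\<lambda>\<omega>. \<xi> i r \<omega> * \<xi> i r' \<omega>) = sfbm_cov (H i) r' r"
      if "i<N" "0 \<le> r" "0 \<le> r'" for i r r'
      by (rule sf2) (use that in auto)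
    have EY: "integral\<^sup>L M (\<lambda>\<omega>. (Y i \<omega>)\<^sup>2) = sfbm_cov (H i) t t + sfbm_cov (H i) s s - 2 * sfbm_cov (H i) s t"
      if i: "i<N" for i
    proof -
      have "(\<lambda>\<omega>. (Y i \<omega>)\<^sup>2) = (\<lambda>\<omega>. (\<xi> i t \<omega> * \<xi> i t \<omega> + \<xi> i s \<omega> * \<xi> i s \<omega>) - 2 * (\<xi> i t \<omega> * \<xi> i s \<omega>))"
        by (auto simp: Y_def power2_eq_square algebra_simps fun_eq_iff)
      then have "integral\<^sup>L M (\<lambda>\<omega>. (Y i \<omega>)\<^sup>2) = (integral\<^sup>L M (\<lambda>\<omega>. \<xi> i t \<omega> * \<xi> i t \<omega>) + integral\<^sup>L M (\<lambda>\<omega>. \<xi> i s \<omega> * \<xi> i s \<omega>)) - 2 * integral\<^sup>L M (\<lambda>\<omega>. \<xi> i t \<omega> * \<xi> i s \<omega>)"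
        using pint[OF i st(2) st(2)] pint[OF i st(1) st(1)] pint[OF i st(2) st(1)]
        by (simp add: Bochner_Integration.integral_diff Bochner_Integration.integral_add)
      also have "\<dots> = sfbm_cov (H i) t t + sfbm_cov (H i) s s - 2 * sfbm_cov (H i) s t"
        using cov[OF i st(2) st(2)] cov[OF i st(1) st(1)] cov[OF i st(2) st(1)] by simp
      finally show ?thesis .
    qed
    have Ypos: "integral\<^sup>L M (\<lambda>\<omega>. (Y i \<omega>)\<^sup>2) > 0" if i: "i<N" for i
      using EY[OF i] var_pos[of "H i" s t] assms(3) i st by simp
    have "\<forall>i. \<exists>\<sigma>. i < N \<longrightarrow> \<sigma> > 0 \<and> distributed M lborel (Y i) (normal_density 0 \<sigma>)"
    proof
      fix i show "\<exists>\<sigma>. i < N \<longrightarrow> \<sigma> > 0 \<and> distributed M lborel (Y i) (normal_density 0 \<sigma>)"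
      proof (cases "i < N")
        case True
        then obtain \<sigma> where "\<sigma> > 0" "distributed M lborel (Y i) (normal_density 0 \<sigma>)"
          using P.cg_normal[OF gY[OF True] Ypos[OF True]] by blast
        then show ?thesis by blast
      qed simp
    qed
    then obtain \<sigma> where \<sigma>0: "\<forall>i. i < N \<longrightarrow> \<sigma> i > 0 \<and> distributed M lborel (Y i) (normal_density 0 (\<sigma> i))"
      by (rule choice[THEN exE])
    then have \<sigma>: "\<And>i. i < N \<Longrightarrow> \<sigma> i > 0 \<and> distributed M lborel (Y i) (normal_density 0 (\<sigma> i))" by blast
    define J where "J = {i. i<N \<and> a i \<noteq> 0}"
    have Jfin: "finite J" unfolding J_def by simp
    have Jne: "J \<noteq> {}" using assms(4) unfolding J_def by blast
    have tm[measurable]: "(\<lambda>f. f t) \<in> borel_measurable (PiM {0..} (\<lambda>_. borel))"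
      by (rule measurable_component_singleton) (use st in auto)
    have sm[measurable]: "(\<lambda>f. f s) \<in> borel_measurable (PiM {0..} (\<lambda>_. borel))"
      by (rule measurable_component_singleton) (use st in auto)
    have ind0: "P.indep_vars (\<lambda>_. borel) (\<lambda>i \<omega>. (\<lambda>f. a i * (f t - f s)) (sfbm_path (\<xi> i) \<omega>)) {..<N}"
      by (rule P.indep_vars_compose2[OF assms(6)]) measurable
    have "(\<lambda>i \<omega>. (\<lambda>f. a i * (f t - f s)) (sfbm_path (\<xi> i) \<omega>)) = (\<lambda>i \<omega>. a i * Y i \<omega>)"
      using st by (auto simp: fun_eq_iff sfbm_path_def Y_def)
    with ind0 have ind: "P.indep_vars (\<lambda>_. borel) (\<lambda>i \<omega>. a i * Y i \<omega>) {..<N}" by simp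
    have indJ: "P.indep_vars (\<lambda>_. borel) (\<lambda>i \<omega>. a i * Y i \<omega>) J"
      by (rule P.indep_vars_subset[OF ind]) (auto simp: J_def)
    have normJ: "distributed M lborel (\<lambda>\<omega>. a i * Y i \<omega>) (normal_density 0 (\<bar>a i\<bar> * \<sigma> i))" if "i \<in> J" for i
    proof -
      have "i < N" "a i \<noteq> 0" using that by (auto simp: J_def)
      from P.normal_density_affine[of "Y i" 0 "\<sigma> i" "a i" 0] \<sigma>[OF \<open>i<N\<close>] \<open>a i \<noteq> 0\<close>
      show ?thesis by simp
    qed
    have posJ: "0 < \<bar>a i\<bar> * \<sigma> i" if "i \<in> J" for i
      using that \<sigma> by (auto simp: J_def)
    define \<sigma>D where "\<sigma>D = sqrt (\<Sum>i\<in>J. (\<bar>a i\<bar> * \<sigma> i)\<^sup>2)"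
    have distD: "distributed M lborel (\<lambda>\<omega>. \<Sum>i\<in>J. a i * Y i \<omega>) (normal_density 0 \<sigma>D)"
      using P.sum_indep_normal[OF Jfin Jne indJ posJ normJ] unfolding \<sigma>D_def by simp
    have sqp: "\<And>i. i\<in>J \<Longrightarrow> 0 < (\<bar>a i\<bar> * \<sigma> i)\<^sup>2" using posJ zero_less_power by blast
    have \<sigma>Dpos: "\<sigma>D > 0" unfolding \<sigma>D_def
      by (intro real_sqrt_gt_zero sum_pos Jfin Jne sqp)
    have Deq: "msfbm N a \<xi> t \<omega> - msfbm N a \<xi> s \<omega> = (\<Sum>i\<in>J. a i * Y i \<omega>)" for \<omega>
    proof -
      have "msfbm N a \<xi> t \<omega> - msfbm N a \<xi> s \<omega> = (\<Sum>i<N. a i * Y i \<omega>)"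
        unfolding msfbm_def Y_def by (simp add: sum_subtractf right_diff_distrib)
      also have "\<dots> = (\<Sum>i\<in>J. a i * Y i \<omega>)"
        by (rule sum.mono_neutral_right) (auto simp: J_def)
      finally show ?thesis .
    qed
    have V: "integral\<^sup>L M (\<lambda>\<omega>. (msfbm N a \<xi> t \<omega> - msfbm N a \<xi> s \<omega>)\<^sup>2) = \<sigma>D\<^sup>2"
      unfolding Deq by (rule P.normal_sq[OF \<sigma>Dpos distD])
    have h: "\<bar>s - t\<bar> > 0" using st by simp
    have "integral\<^sup>L M (\<lambda>\<omega>. (\<bar>s - t\<bar> + \<bar>msfbm N a \<xi> t \<omega> - msfbm N a \<xi> s \<omega>\<bar>) powr (- u))
        \<le> 2/(u-1) * \<bar>s - t\<bar> powr (1-u) / \<sigma>D"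
      unfolding Deq by (rule gauss_bound[OF assms(1) distD \<sigma>Dpos h assms(7)])
    then show ?thesis using V \<sigma>Dpos by (simp add: abs_minus_commute)
  qed
  have c: "2/(u-1) > (0::real)" using assms(7) by simp
  show ?thesis
    by (rule exI[of _ "2/(u-1)"], rule conjI[OF c], intro allI impI, rule key) auto
qed

end
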